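(* Let $(M,d)$ be a metric space and let $F: M \to M$ be nonexpansive with respect to $d$. Let $u \in M$ be a fixed point of $F$ and let $(x^m)_{m\in\mathbb{N}}$ be a sequence in $M$ converging to $u$. Suppose there are constants $\eta, \theta \in (0,1)$, $c > 0$ and $R>0$ such that $$d(F^k(y), u) \le c\,\eta^k \quad\text{for all } y \text{ with } d(y,u)\le R \text{ and all } k\in\mathbb{N},$$ and $$d(F(x^m), x^{m+1}) \le c\,\theta^m \quad \text{for all } m \in \mathbb{N}.$$ Then $$\limsup_{k\to\infty} d(x^k, u)^{1/k} \le \eta^{\lambda} = \theta^{1-\lambda} < 1, \qquad \text{where } \lambda = \frac{\log\theta}{\log\eta + \log\theta}.$$
   Context: $F$ is nonexpansive with respect to $d$ if $d(F(x), F(y)) \le d(x,y)$ for all $x, y \in M$. *)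

theory Defs
  imports "HOL-Analysis.Analysis"
begin

definition nonexpansive :: "('a::metric_space \<Rightarrow> 'a) \<Rightarrow> bool" where
  "nonexpansive F \<longleftrightarrow> (\<forall>x y. dist (F x) (F y) \<le> dist x y)"

end

theory Submission
  imports Defs
begin

lemma tele:
  fixes F :: "'a::metric_space \<Rightarrow> 'a" and x :: "nat \<Rightarrow> 'a" and c \<theta> :: real
  assumes ne: "nonexpansive F"
    and h: "\<And>m. dist (F (x m)) (x (Suc m)) \<le> c * \<theta> ^ m"
  shows "dist (x (n + k)) ((F ^^ k) (x n)) \<le> (\<Sum>i<k. c * \<theta> ^ (n + i))"
proof (induction k)
  case 0
  then show ?case by simp
next
  case (Suc k)
  have "dist (x (n + Suc k)) ((F ^^ Suc k) (x n))
      \<le> dist (x (Suc (n + k))) (F (x (n+k))) + dist (F (x (n+k))) (F ((F ^^ k) (x n)))"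
    by (simp add: dist_triangle)
  also have "\<dots> \<le> c * \<theta> ^ (n + k) + (\<Sum>i<k. c * \<theta> ^ (n + i))"
    using h[of "n+k"] ne Suc unfolding nonexpansive_def
    by (smt (verit, best) dist_commute)
  finally show ?case by simp
qed

theorem mainTheorem12:
  fixes F :: "'a::metric_space \<Rightarrow> 'a" and u :: 'a and x :: "nat \<Rightarrow> 'a"
    and \<eta> \<theta> c R :: real
  assumes "nonexpansive F"
    and "F u = u"
    and "x \<longlonglongrightarrow> u"
    and "0 < \<eta>" "\<eta> < 1" "0 < \<theta>" "\<theta> < 1" "c > 0" "R > 0"
    and "\<And>y k. dist y u \<le> R \<Longrightarrow> dist ((F ^^ k) y) u \<le> c * \<eta> ^ k"
    and "\<And>m. dist (F (x m)) (x (Suc m)) \<le> c * \<theta> ^ m"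
  shows "let lam = ln \<theta> / (ln \<eta> + ln \<theta>) in
           limsup (\<lambda>k. ereal (dist (x k) u powr (1 / real k))) \<le> ereal (\<eta> powr lam)
         \<and> \<eta> powr lam = \<theta> powr (1 - lam)
         \<and> \<theta> powr (1 - lam) < 1"
proof -
  define lam where "lam = ln \<theta> / (ln \<eta> + ln \<theta>)"
  have l1: "ln \<eta> < 0" "ln \<theta> < 0" using assms by auto
  have lam0: "0 < lam" using l1 unfolding lam_def by (simp add: divide_neg_neg)
  have lam1: "lam < 1" using l1 unfolding lam_def by (simp add: divide_simps)
  have eq: "\<eta> powr lam = \<theta> powr (1 - lam)"
  proof -
    have "lam * ln \<eta> = (1 - lam) * ln \<theta>" using l1 unfolding lam_def
      by (simp add: field_simps)
    then show ?thesis using assms by (simp add: powr_def)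
  qed
  have lt: "\<theta> powr (1 - lam) < 1" using assms lam1 l1 by (simp add: powr_def mult_pos_neg)
  define r where "r = \<eta> powr lam"
  have r0: "r > 0" using assms unfolding r_def by simp
  define C where "C = c / (1 - \<theta>)"
  define K where "K = c / \<eta> + C"
  have K0: "K > 0" using assms unfolding K_def C_def by (simp add: add_pos_pos)
  obtain N0 where N0: "\<And>n. n \<ge> N0 \<Longrightarrow> dist (x n) u \<le> R"
    using assms(3) assms(9) unfolding LIMSEQ_def by (meson less_imp_le)
  have sumb: "(\<Sum>i<k. c * \<theta> ^ (n + i)) \<le> C * \<theta> ^ n" for n k
  proof -
    have "(\<Sum>i<k. c * \<theta> ^ (n + i)) = c * \<theta> ^ n * (\<Sum>i<k. \<theta> ^ i)"
      by (simp add: sum_distrib_left power_add mult.assoc)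
    also have "(\<Sum>i<k. \<theta> ^ i) = (1 - \<theta> ^ k) / (1 - \<theta>)"
      using assms by (simp add: sum_gp_strict)
    also have "\<dots> \<le> 1 / (1 - \<theta>)" using assms by (simp add: divide_right_mono)
    finally show ?thesis using assms unfolding C_def
      by (simp add: mult_left_mono)
  qed
  have main: "dist (x (n + k)) u \<le> c * \<eta> ^ k + C * \<theta> ^ n" if "n \<ge> N0" for n k
  proof -
    have "dist (x (n + k)) u \<le> dist (x (n + k)) ((F ^^ k) (x n)) + dist ((F ^^ k) (x n)) u"
      by (rule dist_triangle)
    also have "\<dots> \<le> C * \<theta> ^ n + c * \<eta> ^ k"
      using tele[OF assms(1) assms(11), of n k] sumb[of n k] assms(10)[OF N0[OF that], of k]
      by linarith
    finally show ?thesis by simp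
  qed
  define M where "M = nat (ceiling (real N0 / (1 - lam))) + 1"
  have bound: "dist (x m) u \<le> K * r ^ m" if "m \<ge> M" for m
  proof -
    define n where "n = nat (ceiling ((1 - lam) * m))"
    have m0: "real m > 0" using that unfolding M_def by simp
    have nle: "n \<le> m"
    proof -
      have "(1 - lam) * m \<le> m" using lam0 m0 by simp
      then have "ceiling ((1 - lam) * m) \<le> int m" by (simp add: ceiling_le_iff)
      then show ?thesis unfolding n_def by (metis nat_int nat_mono)
    qed
    have cg: "ceiling ((1 - lam) * m) \<ge> 0" proof -
      have "(1 - lam) * m \<ge> 0" using lam1 m0 by simp
      then show ?thesis by simp
    qed
    have rn: "real n = of_int (ceiling ((1 - lam) * m))" unfolding n_def using cg by simp
    have n1: "real n \<ge> (1 - lam) * m" unfolding rn by (rule le_of_int_ceiling)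
    have n2: "real n < (1 - lam) * m + 1" unfolding rn by linarith
    have nN: "n \<ge> N0"
    proof -
      have "real M \<ge> real N0 / (1 - lam)" unfolding M_def by linarith
      then have "real m \<ge> real N0 / (1 - lam)" using that by linarith
      then have "(1 - lam) * m \<ge> N0" using lam1 by (simp add: field_simps)
      then show ?thesis using n1 by linarith
    qed
    define k where "k = m - n"
    have mk: "m = n + k" using nle unfolding k_def by simp
    have kr: "real k \<ge> lam * m - 1" using n2 nle unfolding k_def by (simp add: of_nat_diff algebra_simps)
    have "\<eta> ^ k = \<eta> powr real k" using assms by (simp add: powr_realpow)
    also have "\<dots> \<le> \<eta> powr (lam * m - 1)" using assms kr by (simp add: powr_mono')
    also have "\<dots> = r ^ m / \<eta>" using assms r0 unfolding r_def
      by (simp add: powr_diff powr_powr powr_realpow[symmetric] mult.commute)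
    finally have e1: "\<eta> ^ k \<le> r ^ m / \<eta>" .
    have "\<theta> ^ n = \<theta> powr real n" using assms by (simp add: powr_realpow)
    also have "\<dots> \<le> \<theta> powr ((1 - lam) * m)" using assms n1 by (simp add: powr_mono')
    also have "\<dots> = r ^ m" using assms r0 unfolding r_def eq
      by (simp add: powr_powr powr_realpow[symmetric] mult.commute)
    finally have e2: "\<theta> ^ n \<le> r ^ m" .
    have C0: "C > 0" using assms unfolding C_def by simp
    have "dist (x m) u \<le> c * \<eta> ^ k + C * \<theta> ^ n" using main[OF nN, of k] mk by simp
    also have "\<dots> \<le> c * (r ^ m / \<eta>) + C * r ^ m"
      using e1 e2 assms C0 by (intro add_mono mult_left_mono) auto
    also have "\<dots> = K * r ^ m" unfolding K_def by (simp add: field_simps)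
    finally show ?thesis .
  qed
  have ev: "eventually (\<lambda>m. ereal (dist (x m) u powr (1 / real m)) \<le> ereal (K powr (1 / real m) * r)) sequentially"
    unfolding eventually_sequentially
  proof (intro exI allI impI)
    fix m assume mM: "m \<ge> M"
    have m0: "real m > 0" using mM unfolding M_def by simp
    have "dist (x m) u powr (1 / real m) \<le> (K * r ^ m) powr (1 / real m)"
      using bound[OF mM] by (simp add: powr_mono2)
    also have "\<dots> = K powr (1 / real m) * r"
      using K0 r0 m0 by (simp add: powr_mult powr_realpow[symmetric] powr_powr)
    finally show "ereal (dist (x m) u powr (1 / real m)) \<le> ereal (K powr (1 / real m) * r)" by simp
  qed
  have lim: "(\<lambda>m. ereal (K powr (1 / real m) * r)) \<longlonglongrightarrow> ereal r"
  proof -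
    have "(\<lambda>m. K powr (1 / real m)) \<longlonglongrightarrow> K powr 0"
      by (intro tendsto_powr tendsto_const lim_1_over_n) (use K0 in auto)
    then have "(\<lambda>m. K powr (1 / real m) * r) \<longlonglongrightarrow> 1 * r" using K0
      by (intro tendsto_mult tendsto_const) auto
    then show ?thesis by (simp add: tendsto_ereal)
  qed
  have "limsup (\<lambda>k. ereal (dist (x k) u powr (1 / real k))) \<le> limsup (\<lambda>m. ereal (K powr (1 / real m) * r))"
    by (rule Limsup_mono[OF ev])
  also have "\<dots> = ereal r" using lim by (simp add: lim_imp_Limsup)
  finally show ?thesis unfolding Let_def lam_def[symmetric] r_def using eq lt by simp
qed

end
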